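(* Let $1<\alpha<2$, $a<b$, and $q\in C[a,b]$. Suppose the boundary value problem $$T^a_\alpha u(t)+q(t)u(t)=0\ \ (a<t<b),\qquad u(a)=u(b)=0,$$ has a solution $u\in AC^2[a,b]$, twice differentiable on $(a,b)$, such that $u(t)\ne0$ for almost every $t\in(a,b)$. Then $$\int_a^b |q(s)|\,(s-a)^{\alpha-2}\,ds\ \ge\ \frac{4}{b-a}.$$
   Context: Conformable derivative: for $0<\beta<1$ and a function $h:[a,\infty)\to\mathbb{R}$, $T^a_\beta h(t)=\lim_{\varepsilon\to0}\frac{h(t+\varepsilon(t-a)^{1-\beta})-h(t)}{\varepsilon}$ for $t>a$, whenever the limit exists. For $1<\alpha<2$ and $g$ with derivative $g'$, $T^a_\alpha g(t)=T^a_{\alpha-1}g'(t)$; for $t>a$ this exists iff $g'$ is differentiable at $t$, and then $T^a_\alpha g(t)=(t-a)^{2-\alpha}g''(t)$. $AC^2[a,b]=\{u\in C^1[a,b]: u'\text{ absolutely continuous on }[a,b]\}$. A solution satisfies the equation at every $t\in(a,b)$ and the boundary conditions. *)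

theory Defs
  imports "HOL-Analysis.Analysis"
begin

definition abs_continuous_on :: "real \<Rightarrow> real \<Rightarrow> (real \<Rightarrow> real) \<Rightarrow> bool" where
  "abs_continuous_on a b f \<longleftrightarrow>
     (\<forall>\<epsilon>>0. \<exists>\<delta>>0. \<forall>(n::nat) (l::nat \<Rightarrow> real) (r::nat \<Rightarrow> real).
        (\<forall>i<n. a \<le> l i \<and> l i \<le> r i \<and> r i \<le> b) \<and>
        (\<forall>i<n. \<forall>j<n. i \<noteq> j \<longrightarrow> r i \<le> l j \<or> r j \<le> l i) \<and>
        (\<Sum>i<n. r i - l i) < \<delta>
        \<longrightarrow> (\<Sum>i<n. \<bar>f (r i) - f (l i)\<bar>) < \<epsilon>)"

definition AC2 :: "real \<Rightarrow> real \<Rightarrow> (real \<Rightarrow> real) \<Rightarrow> bool" where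
  "AC2 a b u \<longleftrightarrow> (\<exists>u'. (\<forall>t\<in>{a..b}. (u has_real_derivative u' t) (at t within {a..b}))
      \<and> continuous_on {a..b} u' \<and> abs_continuous_on a b u')"

definition has_conformable_deriv :: "real \<Rightarrow> real \<Rightarrow> (real \<Rightarrow> real) \<Rightarrow> real \<Rightarrow> real \<Rightarrow> bool" where
  "has_conformable_deriv \<beta> a h t D \<longleftrightarrow>
     ((\<lambda>\<epsilon>. (h (t + \<epsilon> * (t - a) powr (1 - \<beta>)) - h t) / \<epsilon>) \<longlongrightarrow> D) (at 0)"

definition has_conformable_deriv2 :: "real \<Rightarrow> real \<Rightarrow> (real \<Rightarrow> real) \<Rightarrow> real \<Rightarrow> real \<Rightarrow> bool" where
  "has_conformable_deriv2 \<alpha> a g t D \<longleftrightarrow> has_conformable_deriv (\<alpha> - 1) a (deriv g) t D"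

end

theory Submission
  imports Defs
begin

theorem theorem2:
  fixes \<alpha> a b :: real and q u :: "real \<Rightarrow> real"
  assumes "1 < \<alpha>" "\<alpha> < 2" "a < b"
    and "continuous_on {a..b} q"
    and "AC2 a b u"
    and "\<forall>t\<in>{a<..<b}. deriv u differentiable (at t)"
    and "\<forall>t\<in>{a<..<b}. has_conformable_deriv2 \<alpha> a u t (- q t * u t)"
    and "u a = 0" "u b = 0"
    and "AE t in lborel. t \<in> {a<..<b} \<longrightarrow> u t \<noteq> 0"
  shows "(LBINT s=a..b. \<bar>q s\<bar> * (s - a) powr (\<alpha> - 2)) \<ge> 4 / (b - a)"
proof -
  note al1 = assms(1) and al2 = assms(2) and ab = assms(3) and qc = assms(4)
  define g where "g = (\<lambda>s. \<bar>q s\<bar> * (s - a) powr (\<alpha> - 2))"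
  obtain u' where u': "\<forall>t\<in>{a..b}. (u has_real_derivative u' t) (at t within {a..b})"
    using assms(5) unfolding AC2_def by blast
  have uD: "(u has_real_derivative u' t) (at t)" if "t \<in> {a<..<b}" for t
  proof -
    have "t \<in> {a..b}" "a < t" "t < b" using that by auto
    hence "(u has_real_derivative u' t) (at t within {a..b})" using u' by blast
    thus ?thesis using at_within_Icc_at[OF \<open>a < t\<close> \<open>t < b\<close>] by simp
  qed
  have uderiv: "deriv u t = u' t" if "t \<in> {a<..<b}" for t
    using uD[OF that] by (rule DERIV_imp_deriv)
  have ucont: "continuous_on {a..b} u"
    unfolding continuous_on_eq_continuous_within using u' DERIV_continuous by blast
  have u2: "(deriv u has_real_derivative (- q t * u t * (t - a) powr (\<alpha> - 2))) (at t)"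
    if t: "t \<in> {a<..<b}" for t
  proof -
    define D2 where "D2 = deriv (deriv u) t"
    have dd: "(deriv u has_real_derivative D2) (at t)"
      using assms(6) t DERIV_deriv_iff_real_differentiable unfolding D2_def by blast
    define k where "k = (t - a) powr (1 - (\<alpha> - 1))"
    have kpos: "k > 0" using t unfolding k_def by auto
    have hD: "((\<lambda>e. deriv u (t + e * k)) has_real_derivative D2 * k) (at 0)"
    proof (rule DERIV_chain2[of "deriv u"])
      show "(deriv u has_real_derivative D2) (at (t + 0 * k))" using dd by simp
      show "((\<lambda>e. t + e * k) has_real_derivative k) (at 0)"
        by (auto intro!: derivative_eq_intros)
    qed
    hence "((\<lambda>e. (deriv u (t + e * k) - deriv u (t + 0 * k)) / (e - 0)) \<longlongrightarrow> D2 * k) (at 0)"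
      using hD unfolding has_field_derivative_iff by simp
    hence L1: "((\<lambda>e. (deriv u (t + e * (t - a) powr (1 - (\<alpha> - 1))) - deriv u t) / e) \<longlongrightarrow> D2 * k) (at 0)"
      by (simp add: k_def)
    have L2: "((\<lambda>e. (deriv u (t + e * (t - a) powr (1 - (\<alpha> - 1))) - deriv u t) / e) \<longlongrightarrow> - q t * u t) (at 0)"
      using assms(7) t unfolding has_conformable_deriv2_def has_conformable_deriv_def by blast
    have eq: "D2 * k = - q t * u t"
      using tendsto_unique[OF _ L1 L2] by simp
    have "k * (t - a) powr (\<alpha> - 2) = 1"
      using t unfolding k_def by (simp add: powr_add[symmetric])
    hence "D2 = - q t * u t * (t - a) powr (\<alpha> - 2)"
    proof -
      have "D2 = D2 * (k * (t - a) powr (\<alpha> - 2))" using \<open>k * (t - a) powr (\<alpha> - 2) = 1\<close> by simp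
      also have "\<dots> = (D2 * k) * (t - a) powr (\<alpha> - 2)" by (simp only: mult.assoc)
      finally show ?thesis using eq by simp
    qed
    thus ?thesis using dd by simp
  qed
  obtain t0 where t0: "t0 \<in> {a<..<b}" "u t0 \<noteq> 0"
  proof (rule ccontr)
    assume "\<not> thesis"
    hence z: "\<forall>t\<in>{a<..<b}. u t = 0" using that by blast
    have "AE t in lborel. t \<notin> {a<..<b}"
      using assms(10) by eventually_elim (use z in auto)
    hence "{a<..<b} \<in> null_sets lborel"
      by (subst AE_iff_null_sets) auto
    hence "emeasure lborel {a<..<b} = 0" by auto
    thus False using ab by simp
  qed
  have "continuous_on {a..b} (\<lambda>x. \<bar>u x\<bar>)" using ucont by (intro continuous_intros)
  then obtain c where c: "c \<in> {a..b}" "\<forall>y\<in>{a..b}. \<bar>u y\<bar> \<le> \<bar>u c\<bar>"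
    using continuous_attains_sup[of "{a..b}" "\<lambda>x. \<bar>u x\<bar>"] ab by auto
  define M where "M = \<bar>u c\<bar>"
  have Mpos: "M > 0" using c(2) t0 unfolding M_def by force
  have cab: "a < c" "c < b" using c Mpos assms(8,9) unfolding M_def
    by (auto simp: order.order_iff_strict)
  have mv1: "\<exists>l z. a < z \<and> z < c \<and> DERIV u z :> l \<and> u c - u a = (c - a) * l"
  proof (rule MVT)
    show "continuous_on {a..c} u" using cab by (intro continuous_on_subset[OF ucont]) auto
    fix x assume "a < x" "x < c"
    hence "x \<in> {a<..<b}" using cab by auto
    thus "u differentiable at x" using uD unfolding real_differentiable_def by blast
  qed (use cab in auto)
  then obtain x1 l1 where x1: "a < x1" "x1 < c" "DERIV u x1 :> l1" "u c - u a = (c - a) * l1"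
    by blast
  have mv2: "\<exists>l z. c < z \<and> z < b \<and> DERIV u z :> l \<and> u b - u c = (b - c) * l"
  proof (rule MVT)
    show "continuous_on {c..b} u" using cab by (intro continuous_on_subset[OF ucont]) auto
    fix x assume "c < x" "x < b"
    hence "x \<in> {a<..<b}" using cab by auto
    thus "u differentiable at x" using uD unfolding real_differentiable_def by blast
  qed (use cab in auto)
  then obtain x2 l2 where x2: "c < x2" "x2 < b" "DERIV u x2 :> l2" "u b - u c = (b - c) * l2"
    by blast
  have l1: "l1 = deriv u x1" using x1(3) by (simp add: DERIV_imp_deriv)
  have l2: "l2 = deriv u x2" using x2(3) by (simp add: DERIV_imp_deriv)
  have pint: "(\<lambda>s. (s - a) powr (\<alpha> - 2)) integrable_on {a..b}"
  proof -
    have "((\<lambda>x. x powr (\<alpha> - 2)) has_integral ((b-a) powr (\<alpha>-2+1) / (\<alpha>-2+1))) (cbox 0 (b - a))"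
      using has_integral_powr_from_0[of "\<alpha> - 2" "b - a"] al1 ab by simp
    from has_integral_affinity'[OF this, of 1 "-a"]
    show ?thesis by (auto simp: integrable_on_def)
  qed
  have pabs: "(\<lambda>s. (s - a) powr (\<alpha> - 2)) absolutely_integrable_on {a..b}"
    using pint by (subst absolutely_integrable_on_iff_nonneg) auto
  have gabs: "g absolutely_integrable_on {a..b}"
    unfolding g_def
  proof (rule absolutely_integrable_bounded_measurable_product_real[OF _ _ _ pabs])
    show "(\<lambda>s. \<bar>q s\<bar>) \<in> borel_measurable (lebesgue_on {a..b})"
      by (rule continuous_imp_measurable_on_sets_lebesgue) (auto intro!: continuous_intros qc)
    show "bounded ((\<lambda>s. \<bar>q s\<bar>) ` {a..b})"
      by (rule compact_imp_bounded, rule compact_continuous_image) (auto intro!: continuous_intros qc)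
  qed auto
  have gint: "g integrable_on {a..b}" using gabs set_lebesgue_integral_eq_integral(1) by blast
  have gnn: "g s \<ge> 0" for s unfolding g_def by auto
  have gabs': "g absolutely_integrable_on {a<..<b}"
    by (rule set_integrable_subset[OF gabs]) auto
  have gcont: "continuous_on {a<..<b} g"
    unfolding g_def
    by (intro continuous_intros continuous_on_subset[OF qc]) auto
  have gset: "set_integrable lborel {a<..<b} g"
  proof -
    have meas: "(\<lambda>x. indicator {a<..<b} x *\<^sub>R g x) \<in> borel_measurable lborel"
      using borel_measurable_continuous_on_indicator[OF _ gcont] by simp
    show ?thesis using gabs' meas unfolding set_integrable_def
      by (subst (asm) integrable_completion) auto
  qed
  have LB: "(LBINT s=a..b. \<bar>q s\<bar> * (s - a) powr (\<alpha> - 2)) = integral {a<..<b} g"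
    using interval_integral_eq_integral'[of a b g] gset ab by (simp add: g_def)
  have gint': "g integrable_on {a<..<b}" using gabs' set_lebesgue_integral_eq_integral(1) by blast
  define v where "v = (\<lambda>s. - q s * u s * (s - a) powr (\<alpha> - 2))"
  have sub: "{x1..x2} \<subseteq> {a<..<b}" using x1(1) x2(2) by auto
  have ftc: "(v has_integral (deriv u x2 - deriv u x1)) {x1..x2}"
  proof (rule fundamental_theorem_of_calculus)
    show "x1 \<le> x2" using x1(2) x2(1) by linarith
    fix s assume "s \<in> {x1..x2}"
    hence "s \<in> {a<..<b}" using sub by blast
    hence "(deriv u has_real_derivative v s) (at s within {x1..x2})"
      unfolding v_def by (rule has_field_derivative_at_within[OF u2])
    thus "(deriv u has_vector_derivative v s) (at s within {x1..x2})"
      by (simp add: has_real_derivative_iff_has_vector_derivative)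
  qed
  have gsub: "g integrable_on {x1..x2}"
    by (rule integrable_on_subinterval[OF gint]) (use sub in auto)
  have "\<bar>deriv u x2 - deriv u x1\<bar> \<le> integral {x1..x2} (\<lambda>s. M * g s)"
  proof -
    have "norm (integral {x1..x2} v) \<le> integral {x1..x2} (\<lambda>s. M * g s)"
    proof (rule integral_norm_bound_integral)
      show "v integrable_on {x1..x2}" using ftc by blast
      show "(\<lambda>s. M * g s) integrable_on {x1..x2}" using integrable_on_cmult_left[OF gsub, of M] by simp
      fix s assume s: "s \<in> {x1..x2}"
      have "\<bar>u s\<bar> \<le> M" using c(2) s sub unfolding M_def by auto
      have p0: "(s - a) powr (\<alpha> - 2) \<ge> 0" by simp
      have "norm (v s) = \<bar>u s\<bar> * (\<bar>q s\<bar> * (s - a) powr (\<alpha> - 2))"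
        unfolding v_def using p0 by (simp add: abs_mult)
      also have "\<dots> \<le> M * (\<bar>q s\<bar> * (s - a) powr (\<alpha> - 2))"
        by (rule mult_right_mono[OF \<open>\<bar>u s\<bar> \<le> M\<close>]) (use p0 in simp)
      finally show "norm (v s) \<le> M * g s" unfolding g_def .
    qed
    thus ?thesis using ftc by (simp add: integral_unique)
  qed
  also have "\<dots> = M * integral {x1..x2} g" by simp
  also have "\<dots> \<le> M * integral {a<..<b} g"
    using Mpos integral_subset_le[OF sub gsub gint'] gnn by simp
  finally have key: "\<bar>deriv u x2 - deriv u x1\<bar> \<le> M * integral {a<..<b} g" .
  have d1: "deriv u x1 = u c / (c - a)" using x1(4) l1 assms(8) cab by (simp add: field_simps)
  have d2: "deriv u x2 = - u c / (b - c)" using x2(4) l2 assms(9) cab by (simp add: field_simps)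
  have "deriv u x2 - deriv u x1 = - (u c * ((b - a) / ((c - a) * (b - c))))"
  proof -
    have "(b - a) / ((c - a) * (b - c)) = 1/(b-c) + 1/(c-a)" using cab by (simp add: field_simps)
    thus ?thesis unfolding d1 d2 by (simp add: algebra_simps)
  qed
  moreover have "(b - a) / ((c - a) * (b - c)) > 0" using cab by simp
  ultimately have "\<bar>deriv u x2 - deriv u x1\<bar> = M * ((b - a) / ((c - a) * (b - c)))"
    unfolding M_def using cab by (simp add: abs_mult)
  moreover have "4 / (b - a) \<le> (b - a) / ((c - a) * (b - c))"
  proof -
    have "(b-a)*(b-a) - 4*((c-a)*(b-c)) = (2*c-a-b)^2"
      by (simp add: power2_eq_square algebra_simps)
    hence "4 * ((c - a) * (b - c)) \<le> (b - a) * (b - a)"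
      using zero_le_power2[of "2*c-a-b"] by linarith
    hence h: "4 * ((c - a) * (b - c)) \<le> (b - a) * (b - a)" .
    have P: "(c - a) * (b - c) > 0" using cab by simp
    have "4 / (b - a) = (4 * ((c - a) * (b - c))) / ((b - a) * ((c - a) * (b - c)))" using P cab by simp
    also have "\<dots> \<le> ((b - a) * (b - a)) / ((b - a) * ((c - a) * (b - c)))"
      using h P cab by (intro divide_right_mono) auto
    also have "\<dots> = (b - a) / ((c - a) * (b - c))" using cab by simp
    finally show ?thesis .
  qed
  ultimately have "M * (4 / (b - a)) \<le> M * integral {a<..<b} g"
    using key Mpos mult_left_mono[of "4 / (b - a)" "(b - a) / ((c - a) * (b - c))" M] by linarith
  hence "4 / (b - a) \<le> integral {a<..<b} g" using Mpos mult_le_cancel_left_pos by blast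
  thus ?thesis using LB by simp
qed

end
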